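(* Let $\{\varphi_n\}_{n\ge1}$ be an orthonormal system on $[0,1]$ and let $\{d_n\}$ be a sequence of real numbers with $d_n=O\!\left(\frac{\sqrt{n}}{\log^2(n+1)}\right)$. For $a=\{a_n\}\in\ell_2$ put $Q_n(d,a,x)=\sum_{k=1}^{n} d_k a_k \log k\,\varphi_k(x)$ and $B_n(d,a)=\max_{1\le i<n}\left|\int_0^{i/n}Q_n(d,a,x)\,dx\right|$. Suppose that for every $a\in\ell_2$, $B_n(d,a)=O(1)$ as $n\to\infty$. Then for every $f\in BV$, $$\sum_{k=1}^{\infty} d_k^2\, C_k^2(f)\,\log^2 k<+\infty,$$ where $C_k(f)=\int_0^1 f(x)\varphi_k(x)\,dx$.
   Context: $BV$ denotes the class of (finite-valued) functions of bounded variation on $[0,1]$. An orthonormal system on $[0,1]$ is a sequence of functions orthonormal in $L_2(0,1)$. $\log$ denotes the logarithm (so $\log 1=0$). *)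

theory Defs
  imports "HOL-Analysis.Analysis" "HOL-Library.Landau_Symbols"
begin

definition BV01 :: "(real \<Rightarrow> real) \<Rightarrow> bool" where
  "BV01 f \<longleftrightarrow> (\<exists>M. \<forall>xs. sorted xs \<and> set xs \<subseteq> {0..1} \<longrightarrow>
      (\<Sum>i<length xs - 1. \<bar>f (xs ! (i+1)) - f (xs ! i)\<bar>) \<le> M)"

definition orthonormal_system :: "(nat \<Rightarrow> real \<Rightarrow> real) \<Rightarrow> bool" where
  "orthonormal_system \<phi> \<longleftrightarrow>
     (\<forall>n\<ge>1. set_borel_measurable lborel {0..1} (\<phi> n) \<and>
             set_integrable lborel {0..1} (\<lambda>x. (\<phi> n x)^2)) \<and>
     (\<forall>m\<ge>1. \<forall>n\<ge>1. (LINT x:{0..1}|lborel. \<phi> m x * \<phi> n x) = (if m = n then 1 else 0))"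

definition Qn :: "(nat \<Rightarrow> real \<Rightarrow> real) \<Rightarrow> (nat \<Rightarrow> real) \<Rightarrow> (nat \<Rightarrow> real) \<Rightarrow> nat \<Rightarrow> real \<Rightarrow> real" where
  "Qn \<phi> d a n x = (\<Sum>k=1..n. d k * a k * ln (real k) * \<phi> k x)"

definition Bn :: "(nat \<Rightarrow> real \<Rightarrow> real) \<Rightarrow> (nat \<Rightarrow> real) \<Rightarrow> (nat \<Rightarrow> real) \<Rightarrow> nat \<Rightarrow> real" where
  "Bn \<phi> d a n = Max ((\<lambda>i. \<bar>LINT x:{0..real i / real n}|lborel. Qn \<phi> d a n x\<bar>) ` {1..<n})"

definition Fourier_coeff :: "(nat \<Rightarrow> real \<Rightarrow> real) \<Rightarrow> (real \<Rightarrow> real) \<Rightarrow> nat \<Rightarrow> real" where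
  "Fourier_coeff \<phi> f k = (LINT x:{0..1}|lborel. f x * \<phi> k x)"

end

theory Submission
  imports Defs
begin


definition varl :: "(real \<Rightarrow> real) \<Rightarrow> real list \<Rightarrow> real" where
  "varl f xs = (\<Sum>i<length xs - 1. \<bar>f (xs ! (i+1)) - f (xs ! i)\<bar>)"

definition Vf :: "(real \<Rightarrow> real) \<Rightarrow> real \<Rightarrow> real" where
  "Vf f x = Sup (varl f ` {xs. sorted xs \<and> set xs \<subseteq> {0..x}})"

lemma varl_nonneg: "varl f xs \<ge> 0"
  unfolding varl_def by (intro sum_nonneg) auto

lemma varl_snoc: "xs \<noteq> [] \<Longrightarrow> varl f (xs @ [z]) = varl f xs + \<bar>f z - f (last xs)\<bar>"
proof -
  assume "xs \<noteq> []"
  then obtain m where m: "length xs = Suc m" by (cases xs) auto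
  have "varl f (xs @ [z]) = (\<Sum>i<Suc m. \<bar>f ((xs@[z]) ! (i+1)) - f ((xs@[z]) ! i)\<bar>)"
    unfolding varl_def using m by simp
  also have "\<dots> = (\<Sum>i<m. \<bar>f ((xs@[z]) ! (i+1)) - f ((xs@[z]) ! i)\<bar>) + \<bar>f z - f (xs ! m)\<bar>"
    using m by (simp add: nth_append)
  also have "(\<Sum>i<m. \<bar>f ((xs@[z]) ! (i+1)) - f ((xs@[z]) ! i)\<bar>) = varl f xs"
    unfolding varl_def using m by (intro sum.cong) (auto simp: nth_append)
  also have "xs ! m = last xs" using m \<open>xs \<noteq> []\<close> by (simp add: last_conv_nth)
  finally show ?thesis .
qed

lemma varl_snoc_ge: "varl f xs \<le> varl f (xs @ [z])"
proof (cases "xs = []")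
  case False then show ?thesis by (simp add: varl_snoc)
qed (simp add: varl_def)

lemma BV01_bdd:
  assumes "BV01 f"
  obtains M where "\<And>xs. sorted xs \<Longrightarrow> set xs \<subseteq> {0..1} \<Longrightarrow> varl f xs \<le> M"
  using assms unfolding BV01_def varl_def by blast

lemma Vf_props:
  assumes "BV01 f"
  obtains M where "\<And>x. x \<le> 1 \<Longrightarrow> 0 \<le> Vf f x" "\<And>x. x \<le> 1 \<Longrightarrow> Vf f x \<le> M"
    "\<And>x y. 0 \<le> x \<Longrightarrow> x \<le> y \<Longrightarrow> y \<le> 1 \<Longrightarrow> Vf f x + \<bar>f y - f x\<bar> \<le> Vf f y"
proof -
  obtain M where M: "\<And>xs. sorted xs \<Longrightarrow> set xs \<subseteq> {0..1} \<Longrightarrow> varl f xs \<le> M"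
    using BV01_bdd[OF assms] by blast
  have ne: "varl f ` {xs. sorted xs \<and> set xs \<subseteq> {0..x}} \<noteq> {}" for x
    by (auto intro!: exI[of _ "[]"])
  have bdd: "bdd_above (varl f ` {xs. sorted xs \<and> set xs \<subseteq> {0..x}})" if "x \<le> 1" for x
    using M that by (intro bdd_aboveI[of _ M]) fastforce
  have 1: "0 \<le> Vf f x" if "x \<le> 1" for x
  proof -
    have "varl f [] \<le> Vf f x" unfolding Vf_def
      by (rule cSup_upper[OF _ bdd[OF that]]) auto
    then show ?thesis by (simp add: varl_def)
  qed
  have 2: "Vf f x \<le> M" if "x \<le> 1" for x
    unfolding Vf_def using ne that M by (intro cSup_least) fastforce+
  have 3: "Vf f x + \<bar>f y - f x\<bar> \<le> Vf f y" if xy: "0 \<le> x" "x \<le> y" "y \<le> 1" for x y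
  proof -
    have "Vf f x \<le> Vf f y - \<bar>f y - f x\<bar>" unfolding Vf_def
    proof (rule cSup_least[OF ne])
      fix v assume "v \<in> varl f ` {xs. sorted xs \<and> set xs \<subseteq> {0..x}}"
      then obtain xs where xs: "sorted xs" "set xs \<subseteq> {0..x}" and v: "v = varl f xs" by blast
      have s: "sorted ((xs @ [x]) @ [y])" "set ((xs @ [x]) @ [y]) \<subseteq> {0..y}"
        using xs xy by (auto simp: sorted_append)
      have "v + \<bar>f y - f x\<bar> \<le> varl f ((xs @ [x]) @ [y])"
        using v varl_snoc_ge[of f xs x] varl_snoc[of "xs @ [x]" f y] by simp
      also have "\<dots> \<le> Sup (varl f ` {xs. sorted xs \<and> set xs \<subseteq> {0..y}})"
        by (rule cSup_upper[OF _ bdd[OF xy(3)]]) (use s in blast)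
      finally show "v \<le> Sup (varl f ` {xs. sorted xs \<and> set xs \<subseteq> {0..y}}) - \<bar>f y - f x\<bar>" by simp
    qed
    then show ?thesis by simp
  qed
  show ?thesis using that 1 2 3 by blast
qed

lemma BV01_measurable:
  assumes "BV01 f"
  shows "set_borel_measurable lborel {0..1} f"
proof -
  obtain M where V: "\<And>x. x \<le> 1 \<Longrightarrow> 0 \<le> Vf f x" "\<And>x. x \<le> 1 \<Longrightarrow> Vf f x \<le> M"
    "\<And>x y. 0 \<le> x \<Longrightarrow> x \<le> y \<Longrightarrow> y \<le> 1 \<Longrightarrow> Vf f x + \<bar>f y - f x\<bar> \<le> Vf f y"
    using Vf_props[OF assms] by blast
  have m1: "mono_on {0..1} (Vf f)"
    by (rule mono_onI) (use V(3) in fastforce)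
  have m2: "mono_on {0..1} (\<lambda>x. Vf f x - f x)"
  proof (rule mono_onI)
    fix x y :: real assume "x \<in> {0..1}" "y \<in> {0..1}" "x \<le> y"
    then have "Vf f x + \<bar>f y - f x\<bar> \<le> Vf f y" using V(3) by auto
    then show "Vf f x - f x \<le> Vf f y - f y" by linarith
  qed
  have "(\<lambda>x. Vf f x - (Vf f x - f x)) \<in> borel_measurable (restrict_space borel {0..1})"
    using borel_measurable_mono_on_fnc[OF m1] borel_measurable_mono_on_fnc[OF m2] by measurable
  then have "f \<in> borel_measurable (restrict_space lborel {0..1})" by simp
  then show ?thesis unfolding set_borel_measurable_def
    by (subst (asm) borel_measurable_restrict_space_iff) auto
qed



lemma sum_split_lessThan: "(n::nat) \<le> m \<Longrightarrow> (\<Sum>k<m. g k) = (\<Sum>k<n. g k) + (\<Sum>k\<in>{n..<m}. (g k :: real))"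
  using sum.atLeastLessThan_concat[of 0 n m g] by (simp add: atLeast0LessThan)

lemma landau:
  fixes \<beta> :: "nat \<Rightarrow> real"
  assumes H: "\<And>a. summable (\<lambda>n. (a n)^2) \<Longrightarrow> (\<exists>C. \<forall>\<^sub>F n in sequentially. \<bar>\<Sum>k<n. a k * \<beta> k\<bar> \<le> C)"
  shows "summable (\<lambda>n. (\<beta> n)^2)"
proof (rule ccontr)
  assume ns: "\<not> summable (\<lambda>n. (\<beta> n)^2)"
  define S where "S n = 1 + (\<Sum>k<n. (\<beta> k)^2)" for n
  have S1: "S n \<ge> 1" for n unfolding S_def by (simp add: sum_nonneg)
  have Ssuc: "S (Suc n) = S n + (\<beta> n)^2" for n unfolding S_def by simp
  have Smono: "S m \<le> S n" if "m \<le> n" for m n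
    unfolding S_def using that by (intro add_left_mono sum_mono2) auto
  have unb: "\<exists>m. S m > x" for x
  proof (rule ccontr)
    assume "\<not> (\<exists>m. S m > x)"
    then have "(\<Sum>k<n. (\<beta> k)^2) \<le> x" for n unfolding S_def by (metis add_le_same_cancel2 le_add_same_cancel2 not_less order.trans zero_le_one)
    then have "summable (\<lambda>n. (\<beta> n)^2)" by (intro summableI_nonneg_bounded[of _ x]) auto
    with ns show False by simp
  qed
  define a where "a k = \<beta> k / S (Suc k)" for k
  have a2: "(a k)^2 \<le> 1 / S k - 1 / S (Suc k)" for k
  proof -
    have "(a k)^2 = (\<beta> k)^2 / (S (Suc k) * S (Suc k))" unfolding a_def by (simp add: power2_eq_square)
    also have "\<dots> \<le> (\<beta> k)^2 / (S k * S (Suc k))"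
      using S1[of k] S1[of "Suc k"] Smono[of k "Suc k"]
      by (intro divide_left_mono mult_right_mono mult_pos_pos) auto
    also have "\<dots> = 1 / S k - 1 / S (Suc k)"
      using S1[of k] S1[of "Suc k"] unfolding Ssuc by (simp add: field_simps)
    finally show ?thesis .
  qed
  have "summable (\<lambda>n. (a n)^2)"
  proof (rule summableI_nonneg_bounded[of _ 1])
    fix n
    have "(\<Sum>k<n. (a k)^2) \<le> (\<Sum>k<n. 1 / S k - 1 / S (Suc k))" by (intro sum_mono a2)
    also have "\<dots> = 1 / S 0 - 1 / S n" by (subst sum_lessThan_telescope') simp
    also have "\<dots> \<le> 1" using S1[of n] by (simp add: S_def)
    finally show "(\<Sum>k<n. (a k)^2) \<le> 1" .
  qed simp
  from H[OF this] obtain C where C: "\<forall>\<^sub>F n in sequentially. \<bar>\<Sum>k<n. a k * \<beta> k\<bar> \<le> C" by blast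
  define P where "P n = (\<Sum>k<n. a k * \<beta> k)" for n
  have ab: "a k * \<beta> k = (\<beta> k)^2 / S (Suc k)" for k unfolding a_def by (simp add: power2_eq_square)
  have Pmono: "P m \<le> P n" if "m \<le> n" for m n
  proof -
    have "0 \<le> (\<beta> k)^2 / S (Suc k)" for k using S1[of "Suc k"] by simp
    then show ?thesis unfolding P_def ab using that by (intro sum_mono2) auto
  qed
  have grow: "\<exists>n. P n \<ge> real j / 2" for j
  proof (induction j)
    case 0 show ?case by (auto simp: P_def ab intro!: exI[of _ 0])
  next
    case (Suc j)
    then obtain n where n: "P n \<ge> real j / 2" by blast
    obtain m0 where m0: "S m0 > 2 * S n" using unb by blast
    define m where "m = max m0 n"
    have m: "S m \<ge> 2 * S n" "n \<le> m" using Smono[of m0 m] m0 unfolding m_def by auto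
    have "P m - P n = (\<Sum>k\<in>{n..<m}. (\<beta> k)^2 / S (Suc k))"
      unfolding P_def ab using sum_split_lessThan[OF m(2), of "\<lambda>k. (\<beta> k)^2 / S (Suc k)"] by simp
    also have "\<dots> \<ge> (\<Sum>k\<in>{n..<m}. (\<beta> k)^2 / S m)"
    proof (rule sum_mono)
      fix k assume "k \<in> {n..<m}"
      then have "S (Suc k) \<le> S m" by (intro Smono) auto
      moreover have "0 < S (Suc k)" using S1[of "Suc k"] by linarith
      ultimately show "(\<beta> k)^2 / S m \<le> (\<beta> k)^2 / S (Suc k)"
        by (intro divide_left_mono mult_pos_pos) auto
    qed
    moreover have "(\<Sum>k\<in>{n..<m}. (\<beta> k)^2 / S m) = (S m - S n) / S m"
    proof -
      have "S m - S n = (\<Sum>k\<in>{n..<m}. (\<beta> k)^2)"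
        unfolding S_def using sum_split_lessThan[OF m(2), of "\<lambda>k. (\<beta> k)^2"] by simp
      then show ?thesis by (simp add: sum_divide_distrib)
    qed
    moreover have "(S m - S n) / S m \<ge> 1/2" using m S1[of n] by (simp add: field_simps)
    ultimately have "P m \<ge> P n + 1/2" by linarith
    then show ?case using n by (intro exI[of _ m]) auto
  qed
  obtain j :: nat where "real j > 2 * C" using reals_Archimedean2 by blast
  then have j: "real j / 2 > C" by simp
  obtain n where n: "P n \<ge> real j / 2" using grow by blast
  from C obtain N where N: "\<And>m. m \<ge> N \<Longrightarrow> \<bar>P m\<bar> \<le> C" unfolding P_def eventually_sequentially by blast
  have "P (max n N) \<ge> real j / 2" using Pmono[of n "max n N"] n by auto
  moreover have "\<bar>P (max n N)\<bar> \<le> C" using N by auto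
  ultimately show False using j by linarith
qed



lemma sbm_iff:
  assumes "A \<in> sets lborel"
  shows "set_borel_measurable lborel A g \<longleftrightarrow> (g::real\<Rightarrow>real) \<in> borel_measurable (restrict_space lborel A)"
  using assms by (simp add: set_borel_measurable_def borel_measurable_restrict_space_iff)

lemma set_integrable_sum':
  fixes g :: "nat \<Rightarrow> real \<Rightarrow> real"
  assumes "finite K" "\<And>k. k \<in> K \<Longrightarrow> set_integrable M A (g k)"
  shows "set_integrable M A (\<lambda>x. \<Sum>k\<in>K. g k x)"
    and "(LINT x:A|M. (\<Sum>k\<in>K. g k x)) = (\<Sum>k\<in>K. LINT x:A|M. g k x)"
proof -
  have i: "integrable M (\<lambda>x. indicator A x * g k x)" if "k \<in> K" for k
    using assms(2)[OF that] unfolding set_integrable_def by simp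
  show "set_integrable M A (\<lambda>x. \<Sum>k\<in>K. g k x)"
    unfolding set_integrable_def using i by (auto simp: sum_distrib_left intro!: integrable_sum)
  show "(LINT x:A|M. (\<Sum>k\<in>K. g k x)) = (\<Sum>k\<in>K. LINT x:A|M. g k x)"
    unfolding set_lebesgue_integral_def using i by (simp add: sum_distrib_left integral_sum)
qed

lemma set_integral_point: "(LINT x:{a}|lborel. (g::real\<Rightarrow>real) x) = 0"
proof -
  have "(LINT x:{a}|lborel. g x) = (LINT x:{a}|lborel. g a)"
    by (rule set_lebesgue_integral_cong) auto
  also have "\<dots> = 0" by (subst set_integral_const) auto
  finally show ?thesis .
qed

lemma measure_Ioc: "l \<le> u \<Longrightarrow> measure lborel {l<..u::real} = u - l"
  by (simp add: measure_def)

lemma const_int: "set_integrable lborel {a..b::real} (\<lambda>_. c::real)"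
  by (rule borel_integrable_atLeastAtMost') (rule continuous_on_const)

context
  fixes \<phi> :: "nat \<Rightarrow> real \<Rightarrow> real"
  assumes ON: "orthonormal_system \<phi>"
begin

lemma phi_meas: "k \<ge> 1 \<Longrightarrow> \<phi> k \<in> borel_measurable (restrict_space lborel {0..1})"
  using ON unfolding orthonormal_system_def by (auto simp: sbm_iff[symmetric])

lemma phi_sq: "k \<ge> 1 \<Longrightarrow> set_integrable lborel {0..1} (\<lambda>x. (\<phi> k x)^2)"
  using ON unfolding orthonormal_system_def by auto

lemma phi_int: "k \<ge> 1 \<Longrightarrow> set_integrable lborel {0..1} (\<phi> k)"
proof -
  assume k: "k \<ge> 1"
  have i: "set_integrable lborel {0..1} (\<lambda>x. 1 + (\<phi> k x)^2)"
    using const_int phi_sq[OF k] by (rule set_integral_add)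
  moreover have m: "set_borel_measurable lborel {0..1} (\<phi> k)"
    using phi_meas[OF k] by (simp add: sbm_iff)
  moreover have ineq: "\<bar>t\<bar> \<le> \<bar>1 + t^2\<bar>" for t :: real
  proof -
    have "0 \<le> (\<bar>t\<bar> - 1)^2" by simp
    then have "2 * \<bar>t\<bar> \<le> t^2 + 1" by (simp add: power2_diff power2_abs)
    moreover have "0 \<le> t^2" by simp
    ultimately show ?thesis by linarith
  qed
  show ?thesis
    by (rule set_integrable_bound[OF i m]) (intro AE_I2 impI, unfold real_norm_def, rule ineq)
qed

lemma phi_prod: "j \<ge> 1 \<Longrightarrow> k \<ge> 1 \<Longrightarrow> set_integrable lborel {0..1} (\<lambda>x. \<phi> j x * \<phi> k x)"
proof -
  assume j: "j \<ge> 1" and k: "k \<ge> 1"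
  have i: "set_integrable lborel {0..1} (\<lambda>x. (\<phi> j x)^2 + (\<phi> k x)^2)"
    using phi_sq[OF j] phi_sq[OF k] by (rule set_integral_add)
  moreover have m: "set_borel_measurable lborel {0..1} (\<lambda>x. \<phi> j x * \<phi> k x)"
    using phi_meas[OF j] phi_meas[OF k] by (simp add: sbm_iff)
  moreover have ineq: "\<bar>s * t\<bar> \<le> \<bar>s^2 + t^2\<bar>" for s t :: real
  proof -
    have "0 \<le> (\<bar>s\<bar> - \<bar>t\<bar>)^2" by simp
    then have "2 * (\<bar>s\<bar> * \<bar>t\<bar>) \<le> s^2 + t^2" by (simp add: power2_diff power2_abs)
    moreover have "0 \<le> s^2" "0 \<le> t^2" "0 \<le> \<bar>s\<bar> * \<bar>t\<bar>" by simp_all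
    ultimately have "\<bar>s\<bar> * \<bar>t\<bar> \<le> s^2 + t^2" by linarith
    then show ?thesis by (simp add: abs_mult)
  qed
  show ?thesis
    by (rule set_integrable_bound[OF i m])
      (intro AE_I2 impI, unfold real_norm_def, rule ineq)
qed

lemma phi_orth: "j \<ge> 1 \<Longrightarrow> k \<ge> 1 \<Longrightarrow> (LINT x:{0..1}|lborel. \<phi> j x * \<phi> k x) = (if j = k then 1 else 0)"
  using ON unfolding orthonormal_system_def by auto

end


lemma abel_sum:
  fixes u G :: "nat \<Rightarrow> real"
  shows "(\<Sum>i<m. u (Suc i) * (G (Suc i) - G i)) = u m * G m - u 0 * G 0 - (\<Sum>i<m. (u (Suc i) - u i) * G i)"
  by (induction m) (auto simp: algebra_simps)

lemma set_int_subset_le: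
  fixes g :: "real \<Rightarrow> real"
  assumes "set_integrable lborel T g" "S \<in> sets lborel" "S \<subseteq> T" "\<And>x. x \<in> T \<Longrightarrow> 0 \<le> g x"
  shows "(LINT x:S|lborel. g x) \<le> (LINT x:T|lborel. g x)"
proof -
  have "set_integrable lborel S g" using assms(1-3) by (rule set_integrable_subset)
  then show ?thesis using assms unfolding set_lebesgue_integral_def set_integrable_def
    by (intro integral_mono) (auto simp: indicator_def)
qed

lemma amgm_pt:
  fixes t y :: real assumes t: "t > 0"
  shows "\<bar>y\<bar> \<le> (t/2) * y^2 + 1/(2*t)"
proof -
  have "0 \<le> (t*\<bar>y\<bar> - 1)^2" by simp
  then have h: "2*t*\<bar>y\<bar> \<le> t^2*y^2 + 1" by (simp add: power2_diff power_mult_distrib power2_abs algebra_simps)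
  have "(t/2) * y^2 + 1/(2*t) - \<bar>y\<bar> = (t^2*y^2 + 1 - 2*t*\<bar>y\<bar>) / (2*t)"
    using t by (simp add: field_simps power2_eq_square)
  also have "\<dots> \<ge> 0" using h t by simp
  finally show ?thesis by simp
qed

lemma amgm_int:
  fixes g :: "real \<Rightarrow> real"
  assumes S: "S \<in> sets lborel" "S \<subseteq> {0..1}"
    and gi: "set_integrable lborel S g" and g2: "set_integrable lborel S (\<lambda>x. (g x)^2)" and t: "t > 0"
  shows "(LINT x:S|lborel. \<bar>g x\<bar>) \<le> (t/2) * (LINT x:S|lborel. (g x)^2) + measure lborel S / (2*t)"
proof -
  have ci: "set_integrable lborel S (\<lambda>_. 1/(2*t))"
    using const_int S by (rule set_integrable_subset)
  have fin: "emeasure lborel S \<noteq> \<infinity>"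
  proof -
    have "emeasure lborel S \<le> emeasure lborel {0..1::real}" using S by (intro emeasure_mono) auto
    then show ?thesis by (auto simp: top_unique)
  qed
  have i2: "set_integrable lborel S (\<lambda>x. (t/2) * (g x)^2)" using g2 by simp
  have "(LINT x:S|lborel. \<bar>g x\<bar>) \<le> (LINT x:S|lborel. (t/2) * (g x)^2 + 1/(2*t))"
    using gi i2 ci by (intro set_integral_mono set_integrable_abs set_integral_add amgm_pt t) auto
  also have "\<dots> = (t/2) * (LINT x:S|lborel. (g x)^2) + measure lborel S / (2*t)"
    using i2 ci fin S by (simp add: set_integral_add set_integral_const)
  finally show ?thesis .
qed

lemma partition_int:
  fixes g :: "real \<Rightarrow> real"
  assumes gi: "set_integrable lborel {0..1} g" and n: "n \<ge> 1"
  shows "m \<le> n \<Longrightarrow> (LINT x:{0..real m/real n}|lborel. g x) = (\<Sum>i<m. LINT x:{real i/real n<..real (Suc i)/real n}|lborel. g x)"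
proof (induction m)
  case 0
  then show ?case using set_integral_point[of 0 g] by simp
next
  case (Suc m)
  have le: "real m / real n \<le> real (Suc m) / real n" using n by (simp add: divide_right_mono)
  have le1: "real (Suc m) / real n \<le> 1" using Suc.prems n by simp
  have eq: "{0..real (Suc m)/real n} = {0..real m/real n} \<union> {real m/real n<..real (Suc m)/real n}"
  proof -
    have nn: "0 \<le> real m / real n" by simp
    have gen: "0 \<le> a \<Longrightarrow> a \<le> b \<Longrightarrow> {0..b} = {0..a} \<union> {a<..b::real}" for a b by auto
    show ?thesis using gen[OF nn le] .
  qed
  have "(LINT x:{0..real (Suc m)/real n}|lborel. g x) = (LINT x:{0..real m/real n}|lborel. g x) + (LINT x:{real m/real n<..real (Suc m)/real n}|lborel. g x)"
  proof -
    have nn: "0 \<le> real m / real n" by simp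
    have s1: "{0..real m/real n} \<subseteq> {0..1}" using le le1 by auto
    have gen2: "0 \<le> a \<Longrightarrow> b \<le> 1 \<Longrightarrow> {a<..b} \<subseteq> {0..1::real}" for a b by auto
    have s2: "{real m/real n<..real (Suc m)/real n} \<subseteq> {0..1}" using gen2[OF nn le1] .
    show ?thesis unfolding eq
      by (rule set_integral_Un) (force, rule set_integrable_subset[OF gi _ s1], simp, rule set_integrable_subset[OF gi _ s2], simp)
  qed
  then show ?case using Suc by simp
qed



context
  fixes \<phi> :: "nat \<Rightarrow> real \<Rightarrow> real" and f :: "real \<Rightarrow> real"
  assumes ON: "orthonormal_system \<phi>" and BV: "BV01 f"
begin

lemma f_meas: "f \<in> borel_measurable (restrict_space lborel {0..1})"
  using BV01_measurable[OF BV] by (simp add: sbm_iff)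

lemma fphi_int:
  assumes k: "k \<ge> 1" shows "set_integrable lborel {0..1} (\<lambda>x. f x * \<phi> k x)"
proof -
  obtain M where V: "\<And>x. x \<le> 1 \<Longrightarrow> 0 \<le> Vf f x" "\<And>x. x \<le> 1 \<Longrightarrow> Vf f x \<le> M"
    "\<And>x y. 0 \<le> x \<Longrightarrow> x \<le> y \<Longrightarrow> y \<le> 1 \<Longrightarrow> Vf f x + \<bar>f y - f x\<bar> \<le> Vf f y"
    using Vf_props[OF BV] by blast
  define F where "F = \<bar>f 0\<bar> + M"
  have fb: "\<bar>f x\<bar> \<le> F" if "x \<in> {0..1}" for x
  proof -
    have "Vf f 0 + \<bar>f x - f 0\<bar> \<le> Vf f x" using V(3)[of 0 x] that by auto
    then show ?thesis using V(1)[of 0] V(2)[of x] that unfolding F_def by auto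
  qed
  have i: "set_integrable lborel {0..1} (\<lambda>x. F * \<bar>\<phi> k x\<bar>)"
    using set_integrable_abs[OF phi_int[OF ON k]] by simp
  have m: "set_borel_measurable lborel {0..1} (\<lambda>x. f x * \<phi> k x)"
    using f_meas phi_meas[OF ON k] by (simp add: sbm_iff)
  have b: "\<bar>f x * \<phi> k x\<bar> \<le> \<bar>F * \<bar>\<phi> k x\<bar>\<bar>" if "x \<in> {0..1}" for x
    using fb[OF that] by (simp add: abs_mult mult_right_mono)
  show ?thesis
    by (rule set_integrable_bound[OF i m]) (intro AE_I2 impI, unfold real_norm_def, erule b)
qed

lemma main_est:
  obtains K where "K \<ge> 0" "\<And>c n. n \<ge> 2 \<Longrightarrow> \<bar>\<Sum>k=1..n. c k * Fourier_coeff \<phi> f k\<bar> \<le>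
     K * (1 + Max ((\<lambda>i. \<bar>LINT x:{0..real i / real n}|lborel. (\<Sum>k=1..n. c k * \<phi> k x)\<bar>) ` {1..<n})
            + (\<Sum>k=1..n. (c k)^2) / real n)"
proof -
  obtain M where V: "\<And>x. x \<le> 1 \<Longrightarrow> 0 \<le> Vf f x" "\<And>x. x \<le> 1 \<Longrightarrow> Vf f x \<le> M"
    "\<And>x y. 0 \<le> x \<Longrightarrow> x \<le> y \<Longrightarrow> y \<le> 1 \<Longrightarrow> Vf f x + \<bar>f y - f x\<bar> \<le> Vf f y"
    using Vf_props[OF BV] by blast
  have M0: "M \<ge> 0" using V(1)[of 0] V(2)[of 0] by simp
  define K where "K = 2*M + \<bar>f 0\<bar>"
  have K0: "K \<ge> 0" using M0 unfolding K_def by simp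
  have main: "\<bar>\<Sum>k=1..n. c k * Fourier_coeff \<phi> f k\<bar> \<le>
     K * (1 + Max ((\<lambda>i. \<bar>LINT x:{0..real i / real n}|lborel. (\<Sum>k=1..n. c k * \<phi> k x)\<bar>) ` {1..<n})
            + (\<Sum>k=1..n. (c k)^2) / real n)" if n: "n \<ge> 2" for c n
  proof -
    define Q where "Q x = (\<Sum>k=1..n. c k * \<phi> k x)" for x
    define A where "A = (\<Sum>k=1..n. (c k)^2)"
    define B where "B = Max ((\<lambda>i. \<bar>LINT x:{0..real i / real n}|lborel. Q x\<bar>) ` {1..<n})"
    define p where "p i = real i / real n" for i
    define J where "J i = {p i<..p (Suc i)}" for i
    define G where "G i = (LINT x:{0..p i}|lborel. Q x)" for i
    define w where "w i = Vf f (p (Suc i)) - Vf f (p i)" for i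
    define E where "E = (A / real n + 1) / 2"
    define u where "u i = f (p i)" for i
    have A0: "A \<ge> 0" unfolding A_def by (simp add: sum_nonneg)
    have E0: "E \<ge> 0" using A0 unfolding E_def by simp
    have p0: "p 0 = 0" and pn: "p n = 1" using n unfolding p_def by auto
    have pnn: "p i \<ge> 0" for i unfolding p_def by simp
    have ple: "p i \<le> p j" if "i \<le> j" for i j using that unfolding p_def by (simp add: divide_right_mono)
    have p1: "p i \<le> 1" if "i \<le> n" for i using ple[OF that] pn by simp
    have Jsub: "J i \<subseteq> {0..1}" if "i < n" for i
      using pnn[of i] p1[of "Suc i"] that unfolding J_def by auto
    have Jm: "J i \<in> sets lborel" for i unfolding J_def by simp
    have measJ: "measure lborel (J i) = 1 / real n" for i
    proof -
      have "measure lborel (J i) = p (Suc i) - p i" unfolding J_def using ple[of i "Suc i"] by (simp add: measure_Ioc)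
      also have "\<dots> = (real (Suc i) - real i) / real n" unfolding p_def by (simp only: diff_divide_distrib)
      finally show ?thesis by simp
    qed

    have Qi: "set_integrable lborel {0..1} Q"
      unfolding Q_def by (rule set_integrable_sum'(1)) (auto intro!: set_integrable_mult_right phi_int[OF ON])
    have Q2: "(Q x)^2 = (\<Sum>j=1..n. \<Sum>k=1..n. (c j * c k) * (\<phi> j x * \<phi> k x))" for x
      unfolding Q_def power2_eq_square sum_product by (simp add: algebra_simps)
    have Q2i_in: "set_integrable lborel {0..1} (\<lambda>x. \<Sum>k=1..n. (c j * c k) * (\<phi> j x * \<phi> k x))" if "j \<in> {1..n}" for j
      using that by (intro set_integrable_sum'(1)) (auto intro!: set_integrable_mult_right phi_prod[OF ON])
    have Q2i: "set_integrable lborel {0..1} (\<lambda>x. (Q x)^2)"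
      unfolding Q2 by (intro set_integrable_sum'(1) Q2i_in) auto
    have Q2int: "(LINT x:{0..1}|lborel. (Q x)^2) = A"
    proof -
      have "(LINT x:{0..1}|lborel. (Q x)^2) = (\<Sum>j=1..n. LINT x:{0..1}|lborel. (\<Sum>k=1..n. (c j * c k) * (\<phi> j x * \<phi> k x)))"
        unfolding Q2 by (intro set_integrable_sum'(2) Q2i_in) auto
      also have "\<dots> = (\<Sum>j=1..n. \<Sum>k=1..n. (c j * c k) * (LINT x:{0..1}|lborel. \<phi> j x * \<phi> k x))"
        by (intro sum.cong refl, subst set_integrable_sum'(2)) (auto intro!: set_integrable_mult_right phi_prod[OF ON])
      also have "\<dots> = (\<Sum>j=1..n. \<Sum>k=1..n. (c j * c k) * (if j = k then 1 else 0))"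
        using phi_orth[OF ON] by (intro sum.cong refl) auto
      also have "\<dots> = A" unfolding A_def by (simp add: power2_eq_square if_distrib cong: if_cong)
      finally show ?thesis .
    qed
    have fQ_eq: "f x * Q x = (\<Sum>k=1..n. c k * (f x * \<phi> k x))" for x
      unfolding Q_def by (simp add: sum_distrib_left algebra_simps)
    have fQi: "set_integrable lborel {0..1} (\<lambda>x. f x * Q x)"
      unfolding fQ_eq by (rule set_integrable_sum'(1)) (auto intro!: set_integrable_mult_right fphi_int)
    have fQint: "(LINT x:{0..1}|lborel. f x * Q x) = (\<Sum>k=1..n. c k * Fourier_coeff \<phi> f k)"
      unfolding fQ_eq Fourier_coeff_def by (subst set_integrable_sum'(2)) (auto intro!: set_integrable_mult_right fphi_int)
    have n1: "n \<ge> 1" using n by simp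
    have part: "(LINT x:{0..p m}|lborel. g x) = (\<Sum>i<m. LINT x:J i|lborel. g x)"
      if "set_integrable lborel {0..1} g" "m \<le> n" for g :: "real \<Rightarrow> real" and m
      unfolding p_def J_def using partition_int[OF that(1) n1 that(2)] by simp
    have onJ: "set_integrable lborel (J i) g" if "set_integrable lborel {0..1} g" "i < n" for g :: "real \<Rightarrow> real" and i
      using that(1) Jm Jsub[OF that(2)] by (rule set_integrable_subset)
    have total: "(LINT x:{0..1}|lborel. f x * Q x) = (\<Sum>i<n. LINT x:J i|lborel. f x * Q x)"
      using part[OF fQi order_refl] pn by simp
    have G0: "G 0 = 0" unfolding G_def p0 using set_integral_point[of 0 Q] by simp
    have JG: "(LINT x:J i|lborel. Q x) = G (Suc i) - G i" if "i < n" for i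
      unfolding G_def using part[OF Qi, of "Suc i"] part[OF Qi, of i] that by simp
    have absQ: "(LINT x:J i|lborel. \<bar>Q x\<bar>) \<le> E" if "i < n" for i
    proof -
      have t: "(1 / real n) > 0" using n by simp
      have "(LINT x:J i|lborel. \<bar>Q x\<bar>) \<le> ((1/real n)/2) * (LINT x:J i|lborel. (Q x)^2) + measure lborel (J i) / (2*(1/real n))"
        by (rule amgm_int[OF Jm Jsub[OF that] onJ[OF Qi that] onJ[OF Q2i that] t])
      also have "(LINT x:J i|lborel. (Q x)^2) \<le> A"
        using set_int_subset_le[OF Q2i Jm Jsub[OF that]] Q2int by simp
      then have "((1/real n)/2) * (LINT x:J i|lborel. (Q x)^2) \<le> ((1/real n)/2) * A"
        by (intro mult_left_mono) auto
      finally show ?thesis unfolding measJ E_def using n by (simp add: field_simps)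
    qed
    have Vmono: "Vf f x \<le> Vf f y" if "0 \<le> x" "x \<le> y" "y \<le> 1" for x y
      using V(3)[OF that] by simp
    have w0: "w i \<ge> 0" if "i < n" for i
      unfolding w_def using Vmono[OF pnn ple[of i "Suc i"] p1[of "Suc i"]] that by simp
    have fx: "\<bar>f x - f (p (Suc i))\<bar> \<le> w i" if "i < n" "x \<in> J i" for i x
    proof -
      have x: "p i \<le> x" "x \<le> p (Suc i)" using that(2) unfolding J_def by auto
      have "Vf f x + \<bar>f (p (Suc i)) - f x\<bar> \<le> Vf f (p (Suc i))"
        using V(3)[of x "p (Suc i)"] x pnn[of i] p1[of "Suc i"] that(1) by simp
      moreover have "Vf f (p i) \<le> Vf f x" using Vmono[of "p i" x] x pnn[of i] p1[of "Suc i"] that(1) by simp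
      ultimately show ?thesis unfolding w_def by (simp add: abs_minus_commute)
    qed
    have err: "\<bar>LINT x:J i|lborel. (f x - u (Suc i)) * Q x\<bar> \<le> w i * E" if i: "i < n" for i
    proof -
      have gi: "set_integrable lborel (J i) (\<lambda>x. (f x - u (Suc i)) * Q x)"
      proof -
        have "set_integrable lborel (J i) (\<lambda>x. f x * Q x - u (Suc i) * Q x)"
          using onJ[OF fQi i] onJ[OF Qi i] by (intro set_integral_diff(1)) auto
        then show ?thesis by (simp add: left_diff_distrib)
      qed
      have "\<bar>LINT x:J i|lborel. (f x - u (Suc i)) * Q x\<bar> \<le> (LINT x:J i|lborel. \<bar>(f x - u (Suc i)) * Q x\<bar>)"
        using set_integral_norm_bound[OF gi] by simp
      also have "\<dots> \<le> (LINT x:J i|lborel. w i * \<bar>Q x\<bar>)"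
      proof (rule set_integral_mono)
        show "set_integrable lborel (J i) (\<lambda>x. \<bar>(f x - u (Suc i)) * Q x\<bar>)" using gi by (rule set_integrable_abs)
        show "set_integrable lborel (J i) (\<lambda>x. w i * \<bar>Q x\<bar>)"
          using set_integrable_abs[OF onJ[OF Qi i]] by simp
        fix x assume "x \<in> J i"
        then show "\<bar>(f x - u (Suc i)) * Q x\<bar> \<le> w i * \<bar>Q x\<bar>"
          using fx[OF i] unfolding u_def by (simp add: abs_mult mult_right_mono)
      qed
      also have "\<dots> = w i * (LINT x:J i|lborel. \<bar>Q x\<bar>)" by simp
      also have "\<dots> \<le> w i * E" using absQ[OF i] w0[OF i] by (intro mult_left_mono)
      finally show ?thesis .
    qed
    have splitJ: "(LINT x:J i|lborel. f x * Q x) = (LINT x:J i|lborel. (f x - u (Suc i)) * Q x) + u (Suc i) * (G (Suc i) - G i)"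
      if i: "i < n" for i
    proof -
      have "(LINT x:J i|lborel. (f x - u (Suc i)) * Q x) = (LINT x:J i|lborel. f x * Q x - u (Suc i) * Q x)"
        by (simp add: left_diff_distrib)
      also have "\<dots> = (LINT x:J i|lborel. f x * Q x) - u (Suc i) * (LINT x:J i|lborel. Q x)"
        using onJ[OF fQi i] onJ[OF Qi i] by (subst set_integral_diff(2)) auto
      finally show ?thesis using JG[OF i] by simp
    qed
    have Bge: "\<bar>G i\<bar> \<le> B" if "1 \<le> i" "i < n" for i
      unfolding B_def G_def p_def using that by (intro Max_ge) auto
    have B0: "B \<ge> 0" using Bge[of 1] n by simp
    have Gb: "\<bar>G i\<bar> \<le> B" if "i < n" for i
      using Bge[of i] that G0 B0 by (cases "i = 0") auto
    have Gn: "\<bar>G n\<bar> \<le> B + E"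
    proof -
      have nn: "Suc (n - 1) = n" "n - 1 < n" using n by auto
      have "G n = G (n - 1) + (LINT x:J (n-1)|lborel. Q x)" using JG[OF nn(2)] nn(1) by simp
      moreover have "\<bar>LINT x:J (n-1)|lborel. Q x\<bar> \<le> E"
        using set_integral_norm_bound[OF onJ[OF Qi nn(2)]] absQ[OF nn(2)] by simp
      ultimately show ?thesis using Gb[OF nn(2)] by simp
    qed
    have wsum: "(\<Sum>i<n. w i) \<le> M"
    proof -
      have "(\<Sum>i<n. w i) = Vf f (p n) - Vf f (p 0)" unfolding w_def by (rule sum_lessThan_telescope)
      then show ?thesis using V(1)[of 0] V(2)[of 1] pn p0 by simp
    qed
    have ud: "\<bar>u (Suc i) - u i\<bar> \<le> w i" if "i < n" for i
      using V(3)[OF pnn ple[of i "Suc i"] p1[of "Suc i"]] that unfolding w_def u_def by simp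
    have un: "\<bar>u n\<bar> \<le> \<bar>f 0\<bar> + M"
      using V(3)[of 0 1] V(1)[of 0] V(2)[of 1] pn unfolding u_def by simp
    have I_eq: "(\<Sum>k=1..n. c k * Fourier_coeff \<phi> f k) =
       (\<Sum>i<n. LINT x:J i|lborel. (f x - u (Suc i)) * Q x) + (u n * G n - (\<Sum>i<n. (u (Suc i) - u i) * G i))"
    proof -
      have "(\<Sum>k=1..n. c k * Fourier_coeff \<phi> f k) = (\<Sum>i<n. LINT x:J i|lborel. f x * Q x)"
        using fQint total by simp
      also have "\<dots> = (\<Sum>i<n. LINT x:J i|lborel. (f x - u (Suc i)) * Q x) + (\<Sum>i<n. u (Suc i) * (G (Suc i) - G i))"
        using splitJ by (simp add: sum.distrib)
      also have "(\<Sum>i<n. u (Suc i) * (G (Suc i) - G i)) = u n * G n - (\<Sum>i<n. (u (Suc i) - u i) * G i)"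
        using abel_sum[of u G n] G0 by simp
      finally show ?thesis .
    qed
    have T1: "\<bar>\<Sum>i<n. LINT x:J i|lborel. (f x - u (Suc i)) * Q x\<bar> \<le> M * E"
    proof -
      have "\<bar>\<Sum>i<n. LINT x:J i|lborel. (f x - u (Suc i)) * Q x\<bar> \<le> (\<Sum>i<n. \<bar>LINT x:J i|lborel. (f x - u (Suc i)) * Q x\<bar>)"
        by (rule sum_abs)
      also have "\<dots> \<le> (\<Sum>i<n. w i * E)" using err by (intro sum_mono) auto
      also have "\<dots> = (\<Sum>i<n. w i) * E" by (simp add: sum_distrib_right)
      also have "\<dots> \<le> M * E" using wsum E0 by (intro mult_right_mono)
      finally show ?thesis .
    qed
    have T2: "\<bar>\<Sum>i<n. (u (Suc i) - u i) * G i\<bar> \<le> M * B"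
    proof -
      have "\<bar>\<Sum>i<n. (u (Suc i) - u i) * G i\<bar> \<le> (\<Sum>i<n. \<bar>(u (Suc i) - u i) * G i\<bar>)"
        by (rule sum_abs)
      also have "\<dots> \<le> (\<Sum>i<n. w i * B)"
        using ud Gb by (intro sum_mono) (auto simp: abs_mult intro!: mult_mono w0)
      also have "\<dots> = (\<Sum>i<n. w i) * B" by (simp add: sum_distrib_right)
      also have "\<dots> \<le> M * B" using wsum B0 by (intro mult_right_mono)
      finally show ?thesis .
    qed
    have T3: "\<bar>u n * G n\<bar> \<le> (\<bar>f 0\<bar> + M) * (B + E)"
      unfolding abs_mult using un Gn by (intro mult_mono) auto
    have "\<bar>\<Sum>k=1..n. c k * Fourier_coeff \<phi> f k\<bar> \<le> M * E + (\<bar>f 0\<bar> + M) * (B + E) + M * B"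
      unfolding I_eq using T1 T2 T3 by linarith
    also have "\<dots> = K * (E + B)" unfolding K_def by (simp add: algebra_simps)
    also have "\<dots> \<le> K * (1 + B + A / real n)"
    proof -
      have "0 \<le> A / real n" using A0 by simp
      moreover have gen: "0 \<le> y \<Longrightarrow> (y + 1) / 2 \<le> 1 + y" for y :: real by simp
      ultimately have "E \<le> 1 + A / real n" unfolding E_def by blast
      then show ?thesis using K0 by (intro mult_left_mono) auto
    qed
    finally show ?thesis unfolding A_def B_def Q_def .
  qed
  show ?thesis using main that K0 by blast
qed

end


theorem theorem3:
  fixes \<phi> :: "nat \<Rightarrow> real \<Rightarrow> real" and d :: "nat \<Rightarrow> real" and f :: "real \<Rightarrow> real"
  assumes "orthonormal_system \<phi>"
    and "d \<in> O(\<lambda>n. sqrt (real n) / (ln (real n + 1))^2)"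
    and "\<forall>a :: nat \<Rightarrow> real. summable (\<lambda>n. (a n)^2) \<longrightarrow> (\<lambda>n. Bn \<phi> d a n) \<in> O(\<lambda>_. 1)"
    and "BV01 f"
  shows "summable (\<lambda>k. (d (Suc k))^2 * (Fourier_coeff \<phi> f (Suc k))^2 * (ln (real (Suc k)))^2)"
proof -
  note ON = assms(1) and BV = assms(4)
  obtain K where K0: "K \<ge> 0" and K: "\<And>c n. n \<ge> 2 \<Longrightarrow> \<bar>\<Sum>k=1..n. c k * Fourier_coeff \<phi> f k\<bar> \<le>
     K * (1 + Max ((\<lambda>i. \<bar>LINT x:{0..real i / real n}|lborel. (\<Sum>k=1..n. c k * \<phi> k x)\<bar>) ` {1..<n})
            + (\<Sum>k=1..n. (c k)^2) / real n)"
    using main_est[OF ON BV] by blast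
  obtain cd where cd: "cd > 0" "\<forall>\<^sub>F n in sequentially. norm (d n) \<le> cd * norm (sqrt (real n) / (ln (real n + 1))^2)"
    using assms(2) by (elim landau_o.bigE) auto
  then obtain N where N: "\<And>n. n \<ge> N \<Longrightarrow> \<bar>d n\<bar> \<le> cd * \<bar>sqrt (real n) / (ln (real n + 1))^2\<bar>"
    unfolding eventually_sequentially by auto
  define D0 where "D0 = (\<Sum>j<N. (d j * ln (real j))^2)"
  define L where "L = D0 + cd^2 / (ln 2)^2"
  have ln2: "ln (2::real) > 0" by simp
  have dk: "(d k * ln (real k))^2 \<le> L * real n" if "1 \<le> k" "k \<le> n" for k n
  proof -
    have D0: "D0 \<ge> 0" unfolding D0_def by (simp add: sum_nonneg)
    have c2: "cd^2 / (ln 2)^2 \<ge> 0" by simp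
    have "(d k * ln (real k))^2 \<le> D0 + cd^2 / (ln 2)^2 * real k"
    proof (cases "k < N")
      case True
      then have "(d k * ln (real k))^2 \<le> D0" unfolding D0_def
        by (intro member_le_sum) auto
      then show ?thesis using c2 by (simp add: add_increasing2)
    next
      case False
      then have dk: "\<bar>d k\<bar> \<le> cd * (sqrt (real k) / (ln (real k + 1))^2)" using N[of k] by simp
      have lk: "0 \<le> ln (real k)" "ln (real k) \<le> ln (real k + 1)" "ln 2 \<le> ln (real k + 1)"
        using that by auto
      have lpos: "ln (real k + 1) > 0" using lk ln2 by linarith
      have "(d k * ln (real k))^2 = (\<bar>d k\<bar> * ln (real k))^2" using lk by (simp add: power_mult_distrib)
      also have "\<dots> \<le> (cd * (sqrt (real k) / (ln (real k + 1))^2) * ln (real k + 1))^2"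
        using dk lk cd(1) by (intro power_mono mult_mono) auto
      also have "\<dots> = cd^2 * real k / (ln (real k + 1))^2"
        using lpos by (simp add: power_mult_distrib power_divide field_simps)
      also have "\<dots> \<le> cd^2 * real k / (ln 2)^2"
        using lk ln2 by (intro divide_left_mono power_mono mult_pos_pos) auto
      finally show ?thesis using D0 by simp
    qed
    also have "\<dots> \<le> D0 * real n + cd^2 / (ln 2)^2 * real n"
    proof (rule add_mono)
      have "real n \<ge> 1" using that by simp
      then show "D0 \<le> D0 * real n" using D0 by (simp add: mult_le_cancel_left1)
      show "cd^2 / (ln 2)^2 * real k \<le> cd^2 / (ln 2)^2 * real n" using that c2 by (intro mult_left_mono) auto
    qed
    finally show ?thesis unfolding L_def by (simp add: algebra_simps)
  qed
  define \<beta> where "\<beta> k = d (Suc k) * Fourier_coeff \<phi> f (Suc k) * ln (real (Suc k))" for k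
  have "summable (\<lambda>n. (\<beta> n)^2)"
  proof (rule landau)
    fix a :: "nat \<Rightarrow> real" assume sa: "summable (\<lambda>n. (a n)^2)"
    define a' where "a' k = a (k - 1)" for k
    have sa': "summable (\<lambda>n. (a' n)^2)"
    proof -
      have "summable (\<lambda>n. (a' (Suc n))^2)" using sa by (simp add: a'_def)
      then show ?thesis using summable_Suc_iff[of "\<lambda>n. (a' n)^2"] by simp
    qed
    define S where "S = (\<Sum>n. (a' n)^2)"
    have "(\<lambda>n. Bn \<phi> d a' n) \<in> O(\<lambda>_. 1)" using assms(3) sa' by blast
    then obtain cb where cb: "\<forall>\<^sub>F n in sequentially. norm (Bn \<phi> d a' n) \<le> cb * norm (1::real)"
      by (elim landau_o.bigE) auto
    then obtain Nb where Nb: "\<And>n. n \<ge> Nb \<Longrightarrow> \<bar>Bn \<phi> d a' n\<bar> \<le> cb"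
      unfolding eventually_sequentially by auto
    have "\<forall>\<^sub>F n in sequentially. \<bar>\<Sum>k<n. a k * \<beta> k\<bar> \<le> K * (1 + cb + L * S)"
      unfolding eventually_sequentially
    proof (intro exI[of _ "max 2 Nb"] allI impI)
      fix n assume n: "max 2 Nb \<le> n"
      define c where "c k = d k * a' k * ln (real k)" for k
      have eq1: "(\<Sum>k<n. a k * \<beta> k) = (\<Sum>k=1..n. c k * Fourier_coeff \<phi> f k)"
      proof -
        have "(\<Sum>k=1..n. c k * Fourier_coeff \<phi> f k) = (\<Sum>k<n. c (Suc k) * Fourier_coeff \<phi> f (Suc k))"
          using sum.atLeast1_atMost_eq[of "\<lambda>k. c k * Fourier_coeff \<phi> f k" n] by simp
        then show ?thesis unfolding c_def \<beta>_def a'_def by (simp add: algebra_simps)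
      qed
      have eq2: "Max ((\<lambda>i. \<bar>LINT x:{0..real i / real n}|lborel. (\<Sum>k=1..n. c k * \<phi> k x)\<bar>) ` {1..<n}) = Bn \<phi> d a' n"
        unfolding Bn_def Qn_def c_def ..
      have c2: "(\<Sum>k=1..n. (c k)^2) / real n \<le> L * S"
      proof -
        have "(\<Sum>k=1..n. (c k)^2) \<le> (\<Sum>k=1..n. L * real n * (a' k)^2)"
        proof (rule sum_mono)
          fix k assume k: "k \<in> {1..n}"
          have "(c k)^2 = (d k * ln (real k))^2 * (a' k)^2" unfolding c_def by (simp add: power_mult_distrib)
          also have "\<dots> \<le> L * real n * (a' k)^2" using dk[of k n] k by (intro mult_right_mono) auto
          finally show "(c k)^2 \<le> L * real n * (a' k)^2" .
        qed
        also have "\<dots> = L * real n * (\<Sum>k=1..n. (a' k)^2)" by (simp add: sum_distrib_left)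
        also have "\<dots> \<le> L * real n * S"
        proof -
          have L0: "L \<ge> 0" unfolding L_def D0_def by (intro add_nonneg_nonneg sum_nonneg) auto
          show ?thesis unfolding S_def using sa' L0 by (intro mult_left_mono sum_le_suminf) auto
        qed
        finally show ?thesis using n by (simp add: field_simps)
      qed
      have "\<bar>\<Sum>k<n. a k * \<beta> k\<bar> \<le> K * (1 + Bn \<phi> d a' n + (\<Sum>k=1..n. (c k)^2) / real n)"
        using K[of n c] n unfolding eq1 eq2 by simp
      also have "\<dots> \<le> K * (1 + cb + L * S)"
        using K0 Nb[of n] n c2 by (intro mult_left_mono) auto
      finally show "\<bar>\<Sum>k<n. a k * \<beta> k\<bar> \<le> K * (1 + cb + L * S)" .
    qed
    then show "\<exists>C. \<forall>\<^sub>F n in sequentially. \<bar>\<Sum>k<n. a k * \<beta> k\<bar> \<le> C" by blast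
  qed
  then show ?thesis unfolding \<beta>_def by (simp add: power_mult_distrib)
qed

end
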